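(* Let $\mathbf A=(A,\wedge,\vee,\cdot,1,\sim,-,\neg)$ be a complete perfect DqRA. Define on $J^\infty(\mathbf A)$: $I_1=\{i\in J^\infty(\mathbf A)\mid i\leqslant 1\}$, $a\preccurlyeq b$ iff $b\leqslant a$, $c\in a\circ b$ iff $c\leqslant a\cdot b$, $a^\sim={\sim}\kappa(a)$, $a^-=-\kappa(a)$, $a^\neg=\neg\kappa(a)$. Then $a^\neg\in J^\infty(\mathbf A)$ for all $a\in J^\infty(\mathbf A)$, and $\mathbf A_+=(J^\infty(\mathbf A),I_1,\preccurlyeq,\circ,{}^\sim,{}^-,{}^\neg)$ is a DqRA-frame.
   Context: An InFL-algebra is $(A,\wedge,\vee,\cdot,1,\sim,-)$ with a lattice, a monoid, and $a\cdot b\leqslant c\iff a\leqslant -(b\cdot{\sim}c)\iff b\leqslant{\sim}(-c\cdot a)$; $a+b:=-({\sim}b\cdot{\sim}a)$. A quasi relation algebra is $(A,\wedge,\vee,\cdot,1,\sim,-,\neg)$ where the $\neg$-free reduct is an InFL-algebra, $\neg\neg a=a$, $\neg(a\wedge b)=\neg a\vee\neg b$, and $\neg(a\cdot b)=\neg a+\neg b$; DqRA means the lattice is distributive. Complete perfect: complete, and every element is the join of the completely join-irreducibles ($J^\infty(\mathbf A)$) below it and the meet of the completely meet-irreducibles above it. $\kappa(j)=\bigvee\{a\in A\mid j\not\leqslant a\}$. For a set $W$ and $\circ:W\times W\to\mathcal P(W)$, $U\circ V=\bigcup\{a\circ b\mid a\in U,b\in V\}$, $x\circ V=\{x\}\circ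 V$, $U\circ y=U\circ\{y\}$; superscripts compose left to right. A DInFL-frame is a tuple $(W,I,\preccurlyeq,\circ,{}^\sim,{}^-)$ with $I\subseteq W$, $\preccurlyeq$ a partial order, $\circ:W\times W\to\mathcal P(W)$, ${}^\sim,{}^-:W\to W$, such that for all $u,v,x,y,z$: (F1) $x\preccurlyeq y$ iff $y\in I\circ x$ iff $y\in x\circ I$; (F2) $x\preccurlyeq y$, $x\in I$ imply $y\in I$; (F3) $x\preccurlyeq y$, $x\in u\circ v$ imply $y\in u\circ v$; (F4) $(x\circ y)\circ z=x\circ(y\circ z)$; (F5) $z^\sim\in x\circ y$ iff $y^-\in z\circ x$; (F6) $x^{\sim-}\preccurlyeq x$ and $x^{-\sim}\preccurlyeq x$. A DqRA-frame additionally has ${}^\neg:W\to W$ with (F7) $x^{\neg\neg}=x$; (F8) $x\preccurlyeq y$ implies $y^\neg\preccurlyeq x^\neg$; (F9) $z^-\in x\circ y$ iff $z^\neg\in y^{\sim\neg}\circ x^{\sim\neg}$. *)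

theory Defs
  imports Main
begin

text \<open>Algebras are given on a complete lattice type 'a (the lattice order is the
type's order); the operations are explicit parameters:
mult = product, one = 1, tld = \<sim> (tilde), mn = - (minus), ng = \<not>.\<close>

definition InFL_algebra ::
  "('a::lattice \<Rightarrow> 'a \<Rightarrow> 'a) \<Rightarrow> 'a \<Rightarrow> ('a \<Rightarrow> 'a) \<Rightarrow> ('a \<Rightarrow> 'a) \<Rightarrow> bool" where
  "InFL_algebra mult one tld mn \<longleftrightarrow>
     (\<forall>a b c. mult (mult a b) c = mult a (mult b c)) \<and>
     (\<forall>a. mult one a = a \<and> mult a one = a) \<and>
     (\<forall>a b c. (mult a b \<le> c \<longleftrightarrow> a \<le> mn (mult b (tld c))) \<and>
              (a \<le> mn (mult b (tld c)) \<longleftrightarrow> b \<le> tld (mult (mn c) a)))"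

definition infl_plus ::
  "('a \<Rightarrow> 'a \<Rightarrow> 'a) \<Rightarrow> ('a \<Rightarrow> 'a) \<Rightarrow> ('a \<Rightarrow> 'a) \<Rightarrow> 'a \<Rightarrow> 'a \<Rightarrow> 'a" where
  "infl_plus mult tld mn a b = mn (mult (tld b) (tld a))"

definition qRA ::
  "('a::lattice \<Rightarrow> 'a \<Rightarrow> 'a) \<Rightarrow> 'a \<Rightarrow> ('a \<Rightarrow> 'a) \<Rightarrow> ('a \<Rightarrow> 'a) \<Rightarrow> ('a \<Rightarrow> 'a) \<Rightarrow> bool" where
  "qRA mult one tld mn ng \<longleftrightarrow>
     InFL_algebra mult one tld mn \<and>
     (\<forall>a. ng (ng a) = a) \<and>
     (\<forall>a b. ng (inf a b) = sup (ng a) (ng b)) \<and>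
     (\<forall>a b. ng (mult a b) = infl_plus mult tld mn (ng a) (ng b))"

definition DqRA ::
  "('a::lattice \<Rightarrow> 'a \<Rightarrow> 'a) \<Rightarrow> 'a \<Rightarrow> ('a \<Rightarrow> 'a) \<Rightarrow> ('a \<Rightarrow> 'a) \<Rightarrow> ('a \<Rightarrow> 'a) \<Rightarrow> bool" where
  "DqRA mult one tld mn ng \<longleftrightarrow>
     qRA mult one tld mn ng \<and>
     (\<forall>a b c::'a. inf a (sup b c) = sup (inf a b) (inf a c))"

definition cji :: "'a::complete_lattice \<Rightarrow> bool" where
  "cji j \<longleftrightarrow> (\<forall>S. j = Sup S \<longrightarrow> j \<in> S)"

definition cmi :: "'a::complete_lattice \<Rightarrow> bool" where
  "cmi m \<longleftrightarrow> (\<forall>S. m = Inf S \<longrightarrow> m \<in> S)"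

definition Jinf :: "'a::complete_lattice set" where
  "Jinf = {j. cji j}"

definition perfect :: "'a::complete_lattice itself \<Rightarrow> bool" where
  "perfect _ \<longleftrightarrow> (\<forall>a::'a. a = Sup {j. cji j \<and> j \<le> a} \<and> a = Inf {m. cmi m \<and> a \<le> m})"

definition kappa :: "'a::complete_lattice \<Rightarrow> 'a" where
  "kappa j = Sup {a. \<not> j \<le> a}"

definition setcomp :: "('b \<Rightarrow> 'b \<Rightarrow> 'b set) \<Rightarrow> 'b set \<Rightarrow> 'b set \<Rightarrow> 'b set" where
  "setcomp cmp U V = (\<Union>a\<in>U. \<Union>b\<in>V. cmp a b)"

definition DInFL_frame ::
  "'b set \<Rightarrow> 'b set \<Rightarrow> ('b \<Rightarrow> 'b \<Rightarrow> bool) \<Rightarrow> ('b \<Rightarrow> 'b \<Rightarrow> 'b set)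
     \<Rightarrow> ('b \<Rightarrow> 'b) \<Rightarrow> ('b \<Rightarrow> 'b) \<Rightarrow> bool" where
  "DInFL_frame W I le cmp tld mn \<longleftrightarrow>
     I \<subseteq> W \<and>
     (\<forall>x\<in>W. \<forall>y\<in>W. cmp x y \<subseteq> W) \<and>
     (\<forall>x\<in>W. tld x \<in> W \<and> mn x \<in> W) \<and>
     (\<forall>x\<in>W. le x x) \<and>
     (\<forall>x\<in>W. \<forall>y\<in>W. le x y \<and> le y x \<longrightarrow> x = y) \<and>
     (\<forall>x\<in>W. \<forall>y\<in>W. \<forall>z\<in>W. le x y \<and> le y z \<longrightarrow> le x z) \<and>
     (\<forall>u\<in>W. \<forall>v\<in>W. \<forall>x\<in>W. \<forall>y\<in>W. \<forall>z\<in>W.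
        \<comment> \<open>F1\<close>
        ((le x y \<longleftrightarrow> y \<in> setcomp cmp I {x}) \<and>
         (y \<in> setcomp cmp I {x} \<longleftrightarrow> y \<in> setcomp cmp {x} I)) \<and>
        \<comment> \<open>F2\<close>
        (le x y \<and> x \<in> I \<longrightarrow> y \<in> I) \<and>
        \<comment> \<open>F3\<close>
        (le x y \<and> x \<in> cmp u v \<longrightarrow> y \<in> cmp u v) \<and>
        \<comment> \<open>F4\<close>
        (setcomp cmp (cmp x y) {z} = setcomp cmp {x} (cmp y z)) \<and>
        \<comment> \<open>F5\<close>
        (tld z \<in> cmp x y \<longleftrightarrow> mn y \<in> cmp z x) \<and>
        \<comment> \<open>F6\<close>
        le (mn (tld x)) x \<and> le (tld (mn x)) x)"

definition DqRA_frame ::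
  "'b set \<Rightarrow> 'b set \<Rightarrow> ('b \<Rightarrow> 'b \<Rightarrow> bool) \<Rightarrow> ('b \<Rightarrow> 'b \<Rightarrow> 'b set)
     \<Rightarrow> ('b \<Rightarrow> 'b) \<Rightarrow> ('b \<Rightarrow> 'b) \<Rightarrow> ('b \<Rightarrow> 'b) \<Rightarrow> bool" where
  "DqRA_frame W I le cmp tld mn ng \<longleftrightarrow>
     DInFL_frame W I le cmp tld mn \<and>
     (\<forall>x\<in>W. ng x \<in> W) \<and>
     (\<forall>x\<in>W. \<forall>y\<in>W. \<forall>z\<in>W.
        \<comment> \<open>F7\<close>
        ng (ng x) = x \<and>
        \<comment> \<open>F8\<close>
        (le x y \<longrightarrow> le (ng y) (ng x)) \<and>
        \<comment> \<open>F9\<close>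
        (mn z \<in> cmp x y \<longleftrightarrow> ng z \<in> cmp (ng (tld y)) (ng (tld x))))"

end

theory Submission
  imports Defs
begin

locale ctx =
  fixes mult :: "'a::complete_lattice \<Rightarrow> 'a \<Rightarrow> 'a"
    and one :: 'a
    and tld mn ng :: "'a \<Rightarrow> 'a"
  assumes dq: "DqRA mult one tld mn ng"
    and pf: "perfect TYPE('a)"
begin

lemma assoc: "mult (mult a b) c = mult a (mult b c)"
  using dq unfolding DqRA_def qRA_def InFL_algebra_def by blast
lemma unitl: "mult one a = a"
  using dq unfolding DqRA_def qRA_def InFL_algebra_def by blast
lemma unitr: "mult a one = a"
  using dq unfolding DqRA_def qRA_def InFL_algebra_def by blast
lemma res1: "mult a b \<le> c \<longleftrightarrow> a \<le> mn (mult b (tld c))"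
  using dq unfolding DqRA_def qRA_def InFL_algebra_def by blast
lemma res2: "mult a b \<le> c \<longleftrightarrow> b \<le> tld (mult (mn c) a)"
  using dq unfolding DqRA_def qRA_def InFL_algebra_def by blast
lemma ngng: "ng (ng a) = a"
  using dq unfolding DqRA_def qRA_def by blast
lemma ng_inf: "ng (inf a b) = sup (ng a) (ng b)"
  using dq unfolding DqRA_def qRA_def by blast
lemma ng_mult: "ng (mult a b) = mn (mult (tld (ng b)) (tld (ng a)))"
  using dq unfolding DqRA_def qRA_def infl_plus_def by blast
lemma distr: "inf a (sup b c) = sup (inf a b) (inf a (c::'a::complete_lattice))"
  using dq unfolding DqRA_def by blast
lemma jdense: "a = Sup {j. cji j \<and> j \<le> (a::'a)}"
  using pf unfolding perfect_def by blast
lemma mdense: "a = Inf {m. cmi m \<and> (a::'a::complete_lattice) \<le> m}"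
  using pf unfolding perfect_def by blast

lemma mn_tld: "mn (tld c) = c"
proof -
  have "a \<le> c \<longleftrightarrow> a \<le> mn (tld c)" for a using res1[of a one c] unitr unitl by simp
  thus ?thesis by (metis order_refl antisym)
qed

lemma tld_mn: "tld (mn c) = c"
proof -
  have "a \<le> c \<longleftrightarrow> a \<le> tld (mn c)" for a using res2[of one a c] unitr unitl by simp
  thus ?thesis by (metis order_refl antisym)
qed

lemma mono_l: "a \<le> a' \<Longrightarrow> mult a b \<le> mult a' b"
  by (meson order_refl order_trans res1)
lemma mono_r: "b \<le> b' \<Longrightarrow> mult a b \<le> mult a b'"
  by (meson order_refl order_trans res2)

lemma mn_char: "x \<le> mn y \<longleftrightarrow> mult x y \<le> mn one"
  using res1[of x y "mn one"] tld_mn unitr by simp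
lemma tld_char: "y \<le> tld x \<longleftrightarrow> mult x y \<le> tld one"
  using res2[of x y "tld one"] mn_tld unitr unitl by simp

lemma mn_anti: "a \<le> b \<Longrightarrow> mn b \<le> mn a"
  by (meson mn_char mono_r order_refl order_trans)
lemma tld_anti: "a \<le> b \<Longrightarrow> tld b \<le> tld a"
  by (meson tld_char mono_l order_refl order_trans)
lemma mn_le_iff: "mn a \<le> mn b \<longleftrightarrow> b \<le> a"
  by (metis mn_anti tld_anti tld_mn)
lemma tld_le_iff: "tld a \<le> tld b \<longleftrightarrow> b \<le> a"
  by (metis mn_anti tld_anti mn_tld)
lemma swap: "x \<le> mn y \<longleftrightarrow> y \<le> tld x"
  by (metis mn_le_iff mn_tld)
lemma zero: "tld one = mn one"
proof -
  have e: "mult x y \<le> mn one \<longleftrightarrow> mult x y \<le> tld one" for x y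
    using mn_char swap tld_char by blast
  show ?thesis using e[of one "mn one"] e[of one "tld one"] unitl by (simp add: antisym)
qed
lemma tld_le: "tld k \<le> w \<longleftrightarrow> mn w \<le> k"
  by (metis mn_le_iff mn_tld)
lemma mn_le: "mn k \<le> w \<longleftrightarrow> tld w \<le> k"
  by (metis tld_le_iff tld_mn)
lemma ng_anti: "a \<le> b \<Longrightarrow> ng b \<le> ng a"
  by (metis inf.absorb1 ng_inf sup.cobounded2)
lemma ng_le_iff: "ng a \<le> ng b \<longleftrightarrow> b \<le> a"
  by (metis ng_anti ngng)
lemma ng_le: "ng k \<le> w \<longleftrightarrow> ng w \<le> k"
  by (metis ng_le_iff ngng)

lemma rot: "mult u v \<le> mn one \<longleftrightarrow> mult v (tld (tld u)) \<le> mn one"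
  by (metis mn_char mn_tld swap zero tld_char)

lemma cmi_prime:
  assumes m: "cmi (m::'a)" and le: "inf a b \<le> m"
  shows "a \<le> m \<or> b \<le> m"
proof -
  have e1: "inf (sup a m) m = m" by (simp add: inf.absorb2)
  have "inf (sup a m) b = sup (inf b a) (inf b m)"
    using distr[of b a m] by (simp add: inf_commute)
  also have "\<dots> \<le> m" using le by (simp add: inf_commute le_infI2)
  finally have e2: "inf (sup a m) b \<le> m" .
  have "inf (sup a m) (sup b m) = sup (inf (sup a m) b) (inf (sup a m) m)"
    by (rule distr)
  also have "\<dots> = m" using e1 e2 by (simp add: sup_absorb2)
  finally have "m = Inf {sup a m, sup b m}" by simp
  then have "m \<in> {sup a m, sup b m}" using m unfolding cmi_def by blast
  then show ?thesis by (auto simp: sup_absorb2 le_iff_sup sup_commute)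
qed

lemma cji_prime:
  assumes j: "cji (j::'a)" and le: "j \<le> Sup S"
  shows "\<exists>s\<in>S. j \<le> s"
proof (rule ccontr)
  assume nc: "\<not> (\<exists>s\<in>S. j \<le> s)"
  define y where "y = Sup ((\<lambda>s. inf j s) ` S)"
  have yj: "y \<le> j" unfolding y_def by (rule SUP_least) simp
  have nj: "\<not> j \<le> y"
  proof
    assume "j \<le> y"
    then have "j = Sup ((\<lambda>s. inf j s) ` S)" using yj y_def by simp
    then have "j \<in> (\<lambda>s. inf j s) ` S" using j unfolding cji_def by blast
    then obtain s where "s \<in> S" "j = inf j s" by blast
    then show False using nc by (metis inf.cobounded2)
  qed
  have ex: "\<exists>m. cmi m \<and> y \<le> m \<and> \<not> j \<le> m"
  proof (rule ccontr)
    assume "\<not> (\<exists>m. cmi m \<and> y \<le> m \<and> \<not> j \<le> m)"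
    then have "j \<le> Inf {m. cmi m \<and> y \<le> m}" by (auto intro: Inf_greatest)
    then show False using nj mdense[of y] by simp
  qed
  then obtain m where m: "cmi m" "y \<le> m" "\<not> j \<le> m" by blast
  have "Sup S \<le> m"
  proof (rule Sup_least)
    fix s assume s: "s \<in> S"
    have "inf j s \<le> y" unfolding y_def using s by (auto intro: SUP_upper)
    then have "inf j s \<le> m" using m by simp
    then show "s \<le> m" using cmi_prime m by blast
  qed
  then show False using le m by simp
qed

lemma kappa_iff: "cji (j::'a) \<Longrightarrow> a \<le> kappa j \<longleftrightarrow> \<not> j \<le> a"
proof
  assume j: "cji j" and a: "a \<le> kappa j"
  show "\<not> j \<le> a"
  proof
    assume "j \<le> a"
    then have "j \<le> Sup {a. \<not> j \<le> a}" using a unfolding kappa_def by simp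
    then show False using cji_prime[OF j] by blast
  qed
next
  assume "\<not> j \<le> a"
  then show "a \<le> kappa j" unfolding kappa_def by (auto intro: Sup_upper)
qed

lemma kappa_cmi: assumes j: "cji (j::'a)" shows "cmi (kappa j)"
  unfolding cmi_def
proof (intro allI impI)
  fix S assume S: "kappa j = Inf S"
  show "kappa j \<in> S"
  proof (rule ccontr)
    assume ns: "kappa j \<notin> S"
    have "j \<le> s" if "s \<in> S" for s
    proof (rule ccontr)
      assume "\<not> j \<le> s"
      then have "s \<le> kappa j" using kappa_iff[OF j] by simp
      moreover have "kappa j \<le> s" using S that by (simp add: Inf_lower)
      ultimately show False using ns that by (metis antisym)
    qed
    then have "j \<le> kappa j" using S by (auto intro: Inf_greatest)
    then show False using kappa_iff[OF j] by simp
  qed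
qed

lemma kappa_mono: "(y::'a) \<le> x \<Longrightarrow> kappa y \<le> kappa x"
  unfolding kappa_def by (rule Sup_subset_mono) (auto dest: order_trans)

context
  fixes f g :: "'a \<Rightarrow> 'a"
  assumes fa: "\<And>x y. x \<le> y \<Longrightarrow> f y \<le> f x"
    and ga: "\<And>x y. x \<le> y \<Longrightarrow> g y \<le> g x"
    and fg: "\<And>x. f (g x) = x"
    and gf: "\<And>x. g (f x) = x"
begin

lemma ai_Sup: "f (Sup S) = Inf (f ` S)"
proof (rule antisym)
  show "f (Sup S) \<le> Inf (f ` S)" by (auto intro!: INF_greatest fa Sup_upper)
  let ?l = "Inf (f ` S)"
  have "s \<le> g ?l" if "s \<in> S" for s
  proof -
    have "?l \<le> f s" using that by (auto intro: INF_lower)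
    then show ?thesis using ga gf by metis
  qed
  then have "Sup S \<le> g ?l" by (auto intro: Sup_least)
  then show "?l \<le> f (Sup S)" using fa fg by metis
qed

lemma ai_cji: assumes m: "cmi m" shows "cji (g m)"
  unfolding cji_def
proof (intro allI impI)
  fix S assume S: "g m = Sup S"
  then have "m = Inf (f ` S)" using fg ai_Sup by metis
  then have "m \<in> f ` S" using m unfolding cmi_def by blast
  then show "g m \<in> S" using gf by auto
qed

lemma ai_kappa: assumes j: "cji j" shows "kappa (g (kappa j)) = g j"
proof -
  have c: "cji (g (kappa j))" using ai_cji kappa_cmi j by blast
  have e1: "g k \<le> a \<longleftrightarrow> f a \<le> k" for k a by (metis fa ga fg gf)
  have e2: "j \<le> f a \<longleftrightarrow> a \<le> g j" for a by (metis fa ga fg gf)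
  have "a \<le> kappa (g (kappa j)) \<longleftrightarrow> a \<le> g j" for a
    using kappa_iff[OF c] kappa_iff[OF j] e1 e2 by simp
  then show ?thesis by (metis order_refl antisym)
qed

end

lemma approx_l:
  assumes c: "cji c" and le: "c \<le> mult a b"
  shows "\<exists>a'. cji a' \<and> a' \<le> a \<and> c \<le> mult a' b"
proof -
  let ?A = "{j. cji j \<and> j \<le> a}"
  let ?T = "Sup ((\<lambda>x. mult x b) ` ?A)"
  have "Sup ?A \<le> mn (mult b (tld ?T))"
    by (rule Sup_least) (metis res1 SUP_upper)
  then have "mult a b \<le> ?T" using res1 jdense[of a] by simp
  then have "c \<le> ?T" using le by simp
  then show ?thesis using cji_prime[OF c] by auto
qed

lemma approx_r:
  assumes c: "cji c" and le: "c \<le> mult a b"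
  shows "\<exists>b'. cji b' \<and> b' \<le> b \<and> c \<le> mult a b'"
proof -
  let ?A = "{j. cji j \<and> j \<le> b}"
  let ?T = "Sup ((\<lambda>x. mult a x) ` ?A)"
  have "Sup ?A \<le> tld (mult (mn ?T) a)"
    by (rule Sup_least) (metis res2 SUP_upper)
  then have "mult a b \<le> ?T" using res2 jdense[of b] by simp
  then have "c \<le> ?T" using le by simp
  then show ?thesis using cji_prime[OF c] by auto
qed


lemma J_iff: "x \<in> Jinf \<longleftrightarrow> cji x" by (simp add: Jinf_def)

lemma tcji: "cji x \<Longrightarrow> cji (tld (kappa x))"
  by (rule ai_cji[of mn tld]) (auto intro: mn_anti tld_anti mn_tld tld_mn kappa_cmi)
lemma mcji: "cji x \<Longrightarrow> cji (mn (kappa x))"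
  by (rule ai_cji[of tld mn]) (auto intro: mn_anti tld_anti mn_tld tld_mn kappa_cmi)
lemma ncji: "cji x \<Longrightarrow> cji (ng (kappa x))"
  by (rule ai_cji[of ng ng]) (auto intro: ng_anti ngng kappa_cmi)
lemma kt: "cji x \<Longrightarrow> kappa (tld (kappa x)) = tld x"
  by (rule ai_kappa[of mn tld]) (auto intro: mn_anti tld_anti mn_tld tld_mn)
lemma km: "cji x \<Longrightarrow> kappa (mn (kappa x)) = mn x"
  by (rule ai_kappa[of tld mn]) (auto intro: mn_anti tld_anti mn_tld tld_mn)
lemma kn: "cji x \<Longrightarrow> kappa (ng (kappa x)) = ng x"
  by (rule ai_kappa[of ng ng]) (auto intro: ng_anti ngng)

lemma F1a: "cji y \<Longrightarrow> y \<le> x \<longleftrightarrow> (\<exists>i. cji i \<and> i \<le> one \<and> y \<le> mult i x)"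
proof
  assume "cji y" "y \<le> x"
  then show "\<exists>i. cji i \<and> i \<le> one \<and> y \<le> mult i x" using approx_l[of y one x] unitl by simp
next
  assume "\<exists>i. cji i \<and> i \<le> one \<and> y \<le> mult i x"
  then show "y \<le> x" using mono_l[of _ one x] unitl by (metis order_trans)
qed

lemma F1b: "cji y \<Longrightarrow> y \<le> x \<longleftrightarrow> (\<exists>i. cji i \<and> i \<le> one \<and> y \<le> mult x i)"
proof
  assume "cji y" "y \<le> x"
  then show "\<exists>i. cji i \<and> i \<le> one \<and> y \<le> mult x i" using approx_r[of y x one] unitr by simp
next
  assume "\<exists>i. cji i \<and> i \<le> one \<and> y \<le> mult x i"
  then show "y \<le> x" using mono_r[of _ one x] unitr by (metis order_trans)
qed

lemma F4a: "setcomp (\<lambda>a b. {c \<in> Jinf. c \<le> mult a b}) {c \<in> Jinf. c \<le> mult x y} {z}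
   = {c \<in> Jinf. c \<le> mult (mult x y) z}"
  unfolding setcomp_def J_iff
proof safe
  fix c a assume "a \<le> mult x y" "c \<le> mult a z"
  then show "c \<le> mult (mult x y) z" by (meson mono_l order_trans)
next
  fix c assume "cji c" "c \<le> mult (mult x y) z"
  then obtain a where "cji a" "a \<le> mult x y" "c \<le> mult a z" using approx_l by blast
  then show "c \<in> (\<Union>a\<in>{c. cji c \<and> c \<le> mult x y}. \<Union>b\<in>{z}. {c. cji c \<and> c \<le> mult a b})"
    using \<open>cji c\<close> by blast
qed

lemma F4b: "setcomp (\<lambda>a b. {c \<in> Jinf. c \<le> mult a b}) {x} {c \<in> Jinf. c \<le> mult y z}
   = {c \<in> Jinf. c \<le> mult (mult x y) z}"
  unfolding setcomp_def J_iff assoc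
proof safe
  fix c a assume "a \<le> mult y z" "c \<le> mult x a"
  then show "c \<le> mult x (mult y z)" by (meson mono_r order_trans)
next
  fix c assume "cji c" "c \<le> mult x (mult y z)"
  then obtain a where "cji a" "a \<le> mult y z" "c \<le> mult x a" using approx_r by blast
  then show "c \<in> (\<Union>a\<in>{x}. \<Union>b\<in>{c. cji c \<and> c \<le> mult y z}. {c. cji c \<and> c \<le> mult a b})"
    using \<open>cji c\<close> by blast
qed

lemma F5: "cji y \<Longrightarrow> cji z \<Longrightarrow> tld (kappa z) \<le> mult x y \<longleftrightarrow> mn (kappa y) \<le> mult z x"
proof -
  assume y: "cji y" and z: "cji z"
  have "tld (kappa z) \<le> mult x y \<longleftrightarrow> \<not> mult z (mult x y) \<le> mn one"
    using tld_le kappa_iff[OF z] mn_char by simp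
  moreover have "mn (kappa y) \<le> mult z x \<longleftrightarrow> \<not> mult (mult z x) y \<le> mn one"
    using mn_le kappa_iff[OF y] tld_char zero by simp
  ultimately show ?thesis by (simp add: assoc)
qed

lemma F9: "cji x \<Longrightarrow> cji y \<Longrightarrow> cji z \<Longrightarrow> mn (kappa z) \<le> mult x y \<longleftrightarrow>
   ng (kappa z) \<le> mult (ng (kappa (tld (kappa y)))) (ng (kappa (tld (kappa x))))"
proof -
  assume x: "cji x" and y: "cji y" and z: "cji z"
  have "mn (kappa z) \<le> mult x y \<longleftrightarrow> \<not> mult (mult x y) z \<le> mn one"
    using mn_le kappa_iff[OF z] tld_char zero by simp
  moreover have "ng (kappa z) \<le> mult (ng (kappa (tld (kappa y)))) (ng (kappa (tld (kappa x))))
     \<longleftrightarrow> \<not> mult z (mult (tld (tld x)) (tld (tld y))) \<le> mn one"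
  proof -
    have "ng (mult (ng (tld y)) (ng (tld x))) = mn (mult (tld (tld x)) (tld (tld y)))"
      using ng_mult ngng by simp
    then have "ng (kappa z) \<le> mult (ng (tld y)) (ng (tld x)) \<longleftrightarrow> \<not> z \<le> mn (mult (tld (tld x)) (tld (tld y)))"
      using ng_le kappa_iff[OF z] by metis
    then show ?thesis using kt[OF x] kt[OF y] mn_char by simp
  qed
  moreover have "mult (mult x y) z \<le> mn one \<longleftrightarrow> mult z (mult (tld (tld x)) (tld (tld y))) \<le> mn one"
    using rot assoc by metis
  ultimately show ?thesis by simp
qed

end

theorem mainTheorem10:
  fixes mult :: "'a::complete_lattice \<Rightarrow> 'a \<Rightarrow> 'a"
    and one :: 'a
    and tld mn ng :: "'a \<Rightarrow> 'a"
  assumes "DqRA mult one tld mn ng"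
    and "perfect TYPE('a)"
  shows "(\<forall>a\<in>Jinf. ng (kappa a) \<in> (Jinf :: 'a set)) \<and>
         DqRA_frame (Jinf :: 'a set) {i \<in> Jinf. i \<le> one} (\<lambda>a b. b \<le> a)
           (\<lambda>a b. {c \<in> Jinf. c \<le> mult a b})
           (\<lambda>a. tld (kappa a)) (\<lambda>a. mn (kappa a)) (\<lambda>a. ng (kappa a))"
proof -
  interpret ctx mult one tld mn ng using assms by unfold_locales
  let ?cmp = "\<lambda>a b. {c \<in> (Jinf::'a set). c \<le> mult a b}"
  let ?I = "{i \<in> (Jinf::'a set). i \<le> one}"
  have f1: "(y \<le> x \<longleftrightarrow> y \<in> setcomp ?cmp ?I {x}) \<and> (y \<in> setcomp ?cmp ?I {x} \<longleftrightarrow> y \<in> setcomp ?cmp {x} ?I)"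
    if "y \<in> Jinf" for x y :: 'a
  proof -
    have a: "y \<in> setcomp ?cmp ?I {x} \<longleftrightarrow> (\<exists>i. cji i \<and> i \<le> one \<and> y \<le> mult i x)"
      using that unfolding setcomp_def J_iff by blast
    have b: "y \<in> setcomp ?cmp {x} ?I \<longleftrightarrow> (\<exists>i. cji i \<and> i \<le> one \<and> y \<le> mult x i)"
      using that unfolding setcomp_def J_iff by blast
    have c: "cji y" using that by (simp add: J_iff)
    show ?thesis using a b F1a[OF c, of x] F1b[OF c, of x] by simp
  qed
  have f4: "setcomp ?cmp (?cmp x y) {z} = setcomp ?cmp {x} (?cmp y z)" for x y z
    using F4a F4b by simp
  have f6: "x \<le> mn (kappa (tld (kappa x))) \<and> x \<le> tld (kappa (mn (kappa x)))" if "cji x" for x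
    using kt[OF that] km[OF that] mn_tld tld_mn by simp
  have f8: "ng (kappa x) \<le> ng (kappa y)" if "y \<le> x" for x y :: 'a
    using kappa_mono[OF that] ng_anti by blast
  have W: "\<forall>x\<in>Jinf. tld (kappa x) \<in> Jinf \<and> mn (kappa x) \<in> (Jinf::'a set)"
    using tcji mcji by (simp add: J_iff)
  have N: "\<forall>a\<in>Jinf. ng (kappa a) \<in> (Jinf :: 'a set)"
    using ncji by (simp add: J_iff)
  have big: "\<forall>u\<in>Jinf. \<forall>v\<in>Jinf. \<forall>x\<in>Jinf. \<forall>y\<in>Jinf. \<forall>z\<in>(Jinf::'a set).
        ((y \<le> x \<longleftrightarrow> y \<in> setcomp ?cmp ?I {x}) \<and>
         (y \<in> setcomp ?cmp ?I {x} \<longleftrightarrow> y \<in> setcomp ?cmp {x} ?I)) \<and>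
        (y \<le> x \<and> x \<in> ?I \<longrightarrow> y \<in> ?I) \<and>
        (y \<le> x \<and> x \<in> ?cmp u v \<longrightarrow> y \<in> ?cmp u v) \<and>
        (setcomp ?cmp (?cmp x y) {z} = setcomp ?cmp {x} (?cmp y z)) \<and>
        (tld (kappa z) \<in> ?cmp x y \<longleftrightarrow> mn (kappa y) \<in> ?cmp z x) \<and>
        x \<le> mn (kappa (tld (kappa x))) \<and> x \<le> tld (kappa (mn (kappa x)))"
  proof (intro ballI conjI)
    fix u v x y z :: 'a
    assume u: "u \<in> Jinf" and v: "v \<in> Jinf" and x: "x \<in> Jinf" and y: "y \<in> Jinf" and z: "z \<in> Jinf"
    show "(y \<le> x \<longleftrightarrow> y \<in> setcomp ?cmp ?I {x})" using f1[OF y] by blast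
    show "(y \<in> setcomp ?cmp ?I {x} \<longleftrightarrow> y \<in> setcomp ?cmp {x} ?I)" using f1[OF y] by blast
    show "y \<le> x \<and> x \<in> ?I \<longrightarrow> y \<in> ?I" using y by auto
    show "y \<le> x \<and> x \<in> ?cmp u v \<longrightarrow> y \<in> ?cmp u v" using y by auto
    show "setcomp ?cmp (?cmp x y) {z} = setcomp ?cmp {x} (?cmp y z)" by (rule f4)
    show "tld (kappa z) \<in> ?cmp x y \<longleftrightarrow> mn (kappa y) \<in> ?cmp z x"
      using F5[of y z x] y z tcji mcji by (simp add: J_iff)
    show "x \<le> mn (kappa (tld (kappa x)))" using f6 x by (simp add: J_iff)
    show "x \<le> tld (kappa (mn (kappa x)))" using f6 x by (simp add: J_iff)
  qed
  have frame: "DInFL_frame (Jinf :: 'a set) ?I (\<lambda>a b. b \<le> a) ?cmp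
      (\<lambda>a. tld (kappa a)) (\<lambda>a. mn (kappa a))"
    unfolding DInFL_frame_def
  proof (intro conjI)
    show "?I \<subseteq> Jinf" by blast
    show "\<forall>x\<in>Jinf. \<forall>y\<in>Jinf. ?cmp x y \<subseteq> Jinf" by blast
    show "\<forall>x\<in>Jinf. tld (kappa x) \<in> Jinf \<and> mn (kappa x) \<in> (Jinf::'a set)" by (rule W)
    show "\<forall>x\<in>(Jinf::'a set). x \<le> x" by simp
    show "\<forall>x\<in>(Jinf::'a set). \<forall>y\<in>Jinf. y \<le> x \<and> x \<le> y \<longrightarrow> x = y" by auto
    show "\<forall>x\<in>(Jinf::'a set). \<forall>y\<in>Jinf. \<forall>z\<in>Jinf. y \<le> x \<and> z \<le> y \<longrightarrow> z \<le> x" by auto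
  qed (use big in blast)
  have rest: "\<forall>x\<in>Jinf. \<forall>y\<in>Jinf. \<forall>z\<in>(Jinf::'a set).
        ng (kappa (ng (kappa x))) = x \<and>
        (y \<le> x \<longrightarrow> ng (kappa x) \<le> ng (kappa y)) \<and>
        (mn (kappa z) \<in> ?cmp x y \<longleftrightarrow> ng (kappa z) \<in> ?cmp (ng (kappa (tld (kappa y)))) (ng (kappa (tld (kappa x)))))"
  proof (intro ballI conjI)
    fix x y z :: 'a
    assume x: "x \<in> Jinf" and y: "y \<in> Jinf" and z: "z \<in> Jinf"
    show "ng (kappa (ng (kappa x))) = x" using kn x ngng by (simp add: J_iff)
    show "y \<le> x \<longrightarrow> ng (kappa x) \<le> ng (kappa y)" using f8 by blast
    show "mn (kappa z) \<in> ?cmp x y \<longleftrightarrow> ng (kappa z) \<in> ?cmp (ng (kappa (tld (kappa y)))) (ng (kappa (tld (kappa x))))"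
      using F9[of x y z] x y z mcji ncji by (simp add: J_iff)
  qed
  show ?thesis
    unfolding DqRA_frame_def using N frame rest by blast
qed

end
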